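(* Consider a network of $K\ge2$ sensors with $f^1_m=\dots=f^K_m=f_m$ for all $m=0,\dots,M-1$. Fix a state $m$ and let $\bar\phi^{0,\max}_m=\sum_jp^j_m\phi^{0,j}_m$ be a maximin quantizer for state $m$ in the single-sensor problem with densities $f_0,\dots,f_{M-1}$. For each $j$ let $\phi^{\cdot,j}_m=(\phi^{0,j}_m,\dots,\phi^{0,j}_m)$ be the $K$-fold replication, and let $\bar\phi^*_m=\sum_jp^j_m\phi^{\cdot,j}_m$. Then $\bar\phi^*_m$ is a maximin quantizer vector for state $m$.
   Context: Single-sensor notions: a raw observation $X$ has density $f_m$ under state $m\in\{0,\dots,M-1\}$ (probability $\mathbf P_m$); deterministic quantizers are measurable maps to $\{0,1\}$ (set $\Phi$); a randomized quantizer $\bar\phi=\sum_jp^j\phi^j$ is a probability distribution on a countable subset of $\Phi$; $\bar\Phi$ is the set of all quantizers; $f_m(u;\phi)=\mathbf P_m(\phi(X)=u)$, $I(m,m';\phi)=\sum_uf_m(u;\phi)\log\frac{f_m(u;\phi)}{f_{m'}(u;\phi)}$, $I(m,m';\bar\phi)=\sum_jp^jI(m,m';\phi^j)$, $I(m;\bar\phi)=\min_{m'\ne m}I(m,m';\bar\phi)$, and a maximin quantizer for $m$ maximizes $I(m;\cdot)$ over $\bar\Phi$. Multi-sensor setting: sensor $k=1,\dots,K$ observes $X^k$ with density $f^k_m$ under $\mathbf P_m$, independent across sensors. A deterministic quantizer vector is $\phi=(\phi^1,\dots,\phi^K)$ with $\phi^k$ a deterministic quantizer at sensor $k$; $\Phi^{(K)}$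 is their set. A randomized quantizer vector is $\bar\phi=\sum_jp^j\phi^{\cdot,j}$, a probability distribution on a countable subset $\{\phi^{\cdot,j}\}\subset\Phi^{(K)}$; $\overline{\Phi^{(K)}}$ denotes all quantizer vectors. K-L divergences: $I(m,m';\phi)=\sum_{k=1}^KI(m,m';\phi^k)$ (with $I(m,m';\phi^k)$ computed from $f^k_m,f^k_{m'}$) and $I(m,m';\bar\phi)=\sum_jp^jI(m,m';\phi^{\cdot,j})$; $I(m;\bar\phi)=\min_{m'\neq m}I(m,m';\bar\phi)$; a maximin quantizer vector for state $m$ is a $\bar\phi\in\overline{\Phi^{(K)}}$ maximizing $I(m;\bar\phi)$ over $\overline{\Phi^{(K)}}$. *)

theory Defs
  imports "HOL-Probability.Probability"
begin

text \<open>Observation space N (a measure space); f m is the density of the raw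
observation under state m, with respect to N. Quantizer outputs {0,1} are
represented by bool.\<close>

definition densities :: "'a measure \<Rightarrow> nat \<Rightarrow> (nat \<Rightarrow> 'a \<Rightarrow> real) \<Rightarrow> bool" where
  "densities N M f \<longleftrightarrow> (\<forall>m<M. f m \<in> borel_measurable N \<and> (\<forall>x\<in>space N. 0 \<le> f m x)
      \<and> prob_space (density N (\<lambda>x. ennreal (f m x))))"

definition det_quantizers :: "'a measure \<Rightarrow> ('a \<Rightarrow> bool) set" where
  "det_quantizers N = {\<phi>. \<phi> \<in> N \<rightarrow>\<^sub>M count_space UNIV}"

definition qprob :: "'a measure \<Rightarrow> (nat \<Rightarrow> 'a \<Rightarrow> real) \<Rightarrow> nat \<Rightarrow> ('a \<Rightarrow> bool) \<Rightarrow> bool \<Rightarrow> real" where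
  "qprob N f m \<phi> u = measure (density N (\<lambda>x. ennreal (f m x))) {x \<in> space N. \<phi> x = u}"

definition kl_det :: "'a measure \<Rightarrow> (nat \<Rightarrow> 'a \<Rightarrow> real) \<Rightarrow> nat \<Rightarrow> nat \<Rightarrow> ('a \<Rightarrow> bool) \<Rightarrow> ennreal" where
  "kl_det N f m m' \<phi> =
     (if (\<exists>u. qprob N f m \<phi> u > 0 \<and> qprob N f m' \<phi> u = 0) then \<top>
      else ennreal (\<Sum>u\<in>UNIV. if qprob N f m \<phi> u = 0 then 0
                   else qprob N f m \<phi> u * ln (qprob N f m \<phi> u / qprob N f m' \<phi> u)))"

text \<open>Randomized quantizer: a probability distribution (pmf, countable support)
on deterministic quantizers.\<close>
definition rand_quantizer :: "'a measure \<Rightarrow> ('a \<Rightarrow> bool) pmf \<Rightarrow> bool" where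
  "rand_quantizer N q \<longleftrightarrow> set_pmf q \<subseteq> det_quantizers N"

definition kl_rand :: "'a measure \<Rightarrow> (nat \<Rightarrow> 'a \<Rightarrow> real) \<Rightarrow> nat \<Rightarrow> nat \<Rightarrow> ('a \<Rightarrow> bool) pmf \<Rightarrow> ennreal" where
  "kl_rand N f m m' q = (\<integral>\<^sup>+ \<phi>. kl_det N f m m' \<phi> \<partial>measure_pmf q)"

definition kl_min :: "'a measure \<Rightarrow> (nat \<Rightarrow> 'a \<Rightarrow> real) \<Rightarrow> nat \<Rightarrow> nat \<Rightarrow> ('a \<Rightarrow> bool) pmf \<Rightarrow> ennreal" where
  "kl_min N f M m q = (INF m'\<in>{m'. m' < M \<and> m' \<noteq> m}. kl_rand N f m m' q)"

definition maximin_quantizer :: "'a measure \<Rightarrow> (nat \<Rightarrow> 'a \<Rightarrow> real) \<Rightarrow> nat \<Rightarrow> nat \<Rightarrow> ('a \<Rightarrow> bool) pmf \<Rightarrow> bool" where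
  "maximin_quantizer N f M m q \<longleftrightarrow> rand_quantizer N q \<and>
     (\<forall>q'. rand_quantizer N q' \<longrightarrow> kl_min N f M m q' \<le> kl_min N f M m q)"

text \<open>Multi-sensor, all K sensors with the same observation space N and densities f.
Sensors are indexed by k < K; a deterministic quantizer vector is a map
k \<mapsto> phi^k (values at k \<ge> K are irrelevant).\<close>
definition det_quantizer_vecs :: "'a measure \<Rightarrow> nat \<Rightarrow> (nat \<Rightarrow> 'a \<Rightarrow> bool) set" where
  "det_quantizer_vecs N K = {\<phi>. \<forall>k<K. \<phi> k \<in> det_quantizers N}"

definition kl_vec_det :: "'a measure \<Rightarrow> (nat \<Rightarrow> 'a \<Rightarrow> real) \<Rightarrow> nat \<Rightarrow> nat \<Rightarrow> nat \<Rightarrow> (nat \<Rightarrow> 'a \<Rightarrow> bool) \<Rightarrow> ennreal" where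
  "kl_vec_det N f K m m' \<phi> = (\<Sum>k<K. kl_det N f m m' (\<phi> k))"

definition rand_quantizer_vec :: "'a measure \<Rightarrow> nat \<Rightarrow> (nat \<Rightarrow> 'a \<Rightarrow> bool) pmf \<Rightarrow> bool" where
  "rand_quantizer_vec N K q \<longleftrightarrow> set_pmf q \<subseteq> det_quantizer_vecs N K"

definition kl_vec_rand :: "'a measure \<Rightarrow> (nat \<Rightarrow> 'a \<Rightarrow> real) \<Rightarrow> nat \<Rightarrow> nat \<Rightarrow> nat \<Rightarrow> (nat \<Rightarrow> 'a \<Rightarrow> bool) pmf \<Rightarrow> ennreal" where
  "kl_vec_rand N f K m m' q = (\<integral>\<^sup>+ \<phi>. kl_vec_det N f K m m' \<phi> \<partial>measure_pmf q)"

definition kl_vec_min :: "'a measure \<Rightarrow> (nat \<Rightarrow> 'a \<Rightarrow> real) \<Rightarrow> nat \<Rightarrow> nat \<Rightarrow> nat \<Rightarrow> (nat \<Rightarrow> 'a \<Rightarrow> bool) pmf \<Rightarrow> ennreal" where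
  "kl_vec_min N f M K m q = (INF m'\<in>{m'. m' < M \<and> m' \<noteq> m}. kl_vec_rand N f K m m' q)"

definition maximin_quantizer_vec :: "'a measure \<Rightarrow> (nat \<Rightarrow> 'a \<Rightarrow> real) \<Rightarrow> nat \<Rightarrow> nat \<Rightarrow> nat \<Rightarrow> (nat \<Rightarrow> 'a \<Rightarrow> bool) pmf \<Rightarrow> bool" where
  "maximin_quantizer_vec N f M K m q \<longleftrightarrow> rand_quantizer_vec N K q \<and>
     (\<forall>q'. rand_quantizer_vec N K q' \<longrightarrow> kl_vec_min N f M K m q' \<le> kl_vec_min N f M K m q)"

end

theory Submission
  imports Defs
begin

lemma fin_INF_attained:
  fixes g :: "nat \<Rightarrow> ennreal"
  assumes "finite S" "S \<noteq> {}"
  shows "\<exists>x\<in>S. (INF y\<in>S. g y) = g x"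
  using assms
proof (induction S rule: finite_ne_induct)
  case (singleton x) then show ?case by simp
next
  case (insert x F)
  then obtain z where z: "z \<in> F" "(INF y\<in>F. g y) = g z" by auto
  show ?case
  proof (cases "g x \<le> g z")
    case True then show ?thesis using z by (auto simp: inf.absorb1)
  next
    case False then show ?thesis using z by (auto simp: inf.absorb2)
  qed
qed

lemma meas_pmf: "h \<in> borel_measurable (measure_pmf p)"
  by simp

lemma vec_split:
  assumes K: "K > 0"
  shows "kl_vec_rand N f K m m' q =
    of_nat K * kl_rand N f m m' (bind_pmf (pmf_of_set {..<K}) (\<lambda>k. map_pmf (\<lambda>\<phi>. \<phi> k) q))"
proof -
  have ne: "{..<K} \<noteq> {}" using K by auto
  have "kl_vec_rand N f K m m' q = (\<Sum>k<K. \<integral>\<^sup>+ \<phi>. kl_det N f m m' (\<phi> k) \<partial>measure_pmf q)"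
    unfolding kl_vec_rand_def kl_vec_det_def by (rule nn_integral_sum) simp
  moreover have "kl_rand N f m m' (bind_pmf (pmf_of_set {..<K}) (\<lambda>k. map_pmf (\<lambda>\<phi>. \<phi> k) q))
      = (\<Sum>k<K. \<integral>\<^sup>+ \<phi>. kl_det N f m m' (\<phi> k) \<partial>measure_pmf q) / of_nat K"
    unfolding kl_rand_def using ne by (simp add: nn_integral_pmf_of_set)
  moreover have "\<And>s::ennreal. s = of_nat K * (s / of_nat K)"
    using K by (metis ennreal_of_nat_neq_top ennreal_times_divide mult.commute
        ennreal_divide_times of_nat_0_less_iff ennreal_eq_0_iff not_gr0 of_nat_eq_0_iff
        ennreal_mult_divide_eq)
  ultimately show ?thesis by metis
qed

lemma rep_split:
  "kl_vec_rand N f K m m' (map_pmf (\<lambda>\<phi>. \<lambda>k. \<phi>) p) = of_nat K * kl_rand N f m m' p"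
  unfolding kl_vec_rand_def kl_vec_det_def kl_rand_def
  by (simp add: nn_integral_cmult)

theorem proposition5p1:
  fixes N :: "'a measure" and f :: "nat \<Rightarrow> 'a \<Rightarrow> real" and M K m :: nat
    and p :: "('a \<Rightarrow> bool) pmf"
  assumes "densities N M f"
    and "K \<ge> 2"
    and "m < M"
    and "maximin_quantizer N f M m p"
  shows "maximin_quantizer_vec N f M K m (map_pmf (\<lambda>\<phi>. \<lambda>k. \<phi>) p)"
proof -
  have K: "K > 0" using assms(2) by simp
  have rp: "rand_quantizer N p" and mx: "\<And>q'. rand_quantizer N q' \<Longrightarrow> kl_min N f M m q' \<le> kl_min N f M m p"
    using assms(4) unfolding maximin_quantizer_def by auto
  define S where "S = {m'. m' < M \<and> m' \<noteq> m}"
  have finS: "finite S" unfolding S_def by simp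
  have rv: "rand_quantizer_vec N K (map_pmf (\<lambda>\<phi>. \<lambda>k. \<phi>) p)"
    using rp unfolding rand_quantizer_vec_def rand_quantizer_def det_quantizer_vecs_def by auto
  show ?thesis unfolding maximin_quantizer_vec_def
  proof (intro conjI rv allI impI)
    fix q' assume q': "rand_quantizer_vec N K q'"
    define q'' where "q'' = bind_pmf (pmf_of_set {..<K}) (\<lambda>k. map_pmf (\<lambda>\<phi>. \<phi> k) q')"
    have sK: "set_pmf (pmf_of_set {..<K}) = {..<K}" using K by (intro set_pmf_of_set) auto
    have rq: "rand_quantizer N q''"
      using q' K sK unfolding q''_def rand_quantizer_vec_def rand_quantizer_def det_quantizer_vecs_def
      by auto
    have le: "kl_min N f M m q'' \<le> kl_min N f M m p" using mx[OF rq] .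
    show "kl_vec_min N f M K m q' \<le> kl_vec_min N f M K m (map_pmf (\<lambda>\<phi>. \<lambda>k. \<phi>) p)"
    proof (cases "S = {}")
      case True
      then have "{m'. m' < M \<and> m' \<noteq> m} = {}" unfolding S_def .
      then show ?thesis unfolding kl_vec_min_def by (simp only: INF_empty order_refl)
    next
      case False
      have A: "kl_vec_min N f M K m q' = (INF m'\<in>S. of_nat K * kl_rand N f m m' q'')"
        unfolding kl_vec_min_def S_def q''_def by (simp only: vec_split[OF K])
      have B: "kl_vec_min N f M K m (map_pmf (\<lambda>\<phi>. \<lambda>k. \<phi>) p) = (INF m'\<in>S. of_nat K * kl_rand N f m m' p)"
        unfolding kl_vec_min_def S_def by (simp add: rep_split)
      obtain a where a: "a \<in> S" "kl_min N f M m q'' = kl_rand N f m a q''"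
        using fin_INF_attained[OF finS False, of "\<lambda>m'. kl_rand N f m m' q''"]
        unfolding kl_min_def S_def by auto
      obtain b where b: "b \<in> S" "(INF m'\<in>S. of_nat K * kl_rand N f m m' p) = of_nat K * kl_rand N f m b p"
        using fin_INF_attained[OF finS False, of "\<lambda>m'. of_nat K * kl_rand N f m m' p"] by auto
      have "kl_min N f M m p \<le> kl_rand N f m b p"
        unfolding kl_min_def using b(1) unfolding S_def by (rule INF_lower)
      hence "kl_rand N f m a q'' \<le> kl_rand N f m b p" using le a(2) by simp
      hence "of_nat K * kl_rand N f m a q'' \<le> of_nat K * kl_rand N f m b p"
        by (rule mult_left_mono) simp
      moreover have "(INF m'\<in>S. of_nat K * kl_rand N f m m' q'') \<le> of_nat K * kl_rand N f m a q''"
        using a(1) by (rule INF_lower)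
      ultimately show ?thesis using A B b(2) by simp
    qed
  qed
qed

end
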